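(* Let $(T,f,\sqsubseteq_L)$ be a leaf-ordered merge tree. Then $\mathcal L(\mathcal T((T,f,\sqsubseteq_L)))=(T,f,\sqsubseteq_L)$.
   Context: A merge tree $(T,f)$: a finite rooted tree $T$ identified with its topological realisation, with a continuous $f\colon T\to\mathbb{R}\cup\{\infty\}$ strictly increasing towards the root, $f(v)=\infty$ iff $v$ is the root; lowest leaf at height $0$; $L(T)$ is the set of leaves. $T_x$ is the subtree of descendants of $x$; $\mathrm{lca}$ the lowest common ancestor; $\mathrm{anc}_h(x)$ the unique ancestor of $x$ at height $h\ge f(x)$; $\mathbb{L}_h=\{x:f(x)=h\}$. A layer-order is a family $(\le_h)_{h\ge0}$ of total orders on the $\mathbb{L}_h$ that is consistent ($h_1\le h_2$ and $x_1\le_{h_1}x_2$ imply $\mathrm{anc}_{h_2}(x_1)\le_{h_2}\mathrm{anc}_{h_2}(x_2)$); $(T,f,(\le_h))$ is an ordered merge tree. A leaf-order is a total order $\sqsubseteq_L$ on $L(T)$ such that $u_1\sqsubseteq_L u\sqsubseteq_L u_2$ implies $u\in T_{\mathrm{lca}(u_1,u_2)}$; $(T,f,\sqsubseteq_L)$ is a leaf-ordered merge tree. $\mathcal L((T,f,(\le_h)))=(T,f,\sqsubseteq_L)$ with $u_1\sqsubseteq_L u_2$ iff $\mathrm{anc}_h(u_1)\le_h\mathrm{anc}_h(u_2)$ for $h=\max(f(u_1),f(u_2))$. $\mathcal T((T,f,\sqsubseteq_L))=(T,f,(\le_h))$ with $x_1\le_h x_2$ (for $x_1,x_2\in\mathbb{L}_h$)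 iff $x_1=x_2$ or $u_1\sqsubseteq_L u_2$ for all leaves $u_1\in T_{x_1}$, $u_2\in T_{x_2}$. *)

theory Defs
  imports "HOL-Library.Extended_Real"
begin

text \<open>
  The topological realisation is parametrised by
  height: a point is a pair (v,h) with v a non-root vertex and
  fv v <= h < fv (parent v) (a point on the edge from v up to its parent,
  the vertex v itself being (v, fv v)), or the root point (r, infinity).
  The function f on the realisation is the second component.
\<close>

definition mt_leafv :: "'v set \<Rightarrow> 'v \<Rightarrow> ('v \<Rightarrow> 'v) \<Rightarrow> 'v set" where
  "mt_leafv V r parent = {v \<in> V - {r}. \<forall>w \<in> V - {r}. parent w \<noteq> v}"

definition merge_tree :: "'v set \<Rightarrow> 'v \<Rightarrow> ('v \<Rightarrow> 'v) \<Rightarrow> ('v \<Rightarrow> ereal) \<Rightarrow> bool" where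
  "merge_tree V r parent fv \<longleftrightarrow>
     finite V \<and> r \<in> V \<and> parent r = r \<and>
     (\<forall>v \<in> V. parent v \<in> V) \<and>
     (\<forall>v \<in> V. \<exists>n. (parent ^^ n) v = r) \<and>
     (\<forall>v \<in> V. fv v = \<infinity> \<longleftrightarrow> v = r) \<and>
     (\<forall>v \<in> V - {r}. fv v < fv (parent v)) \<and>
     (\<forall>v \<in> mt_leafv V r parent. 0 \<le> fv v) \<and>
     (\<exists>v \<in> mt_leafv V r parent. fv v = 0)"

definition mt_points :: "'v set \<Rightarrow> 'v \<Rightarrow> ('v \<Rightarrow> 'v) \<Rightarrow> ('v \<Rightarrow> ereal) \<Rightarrow> ('v \<times> ereal) set" where
  "mt_points V r parent fv =
     {(v, h). v \<in> V \<and> (if v = r then h = \<infinity> else fv v \<le> h \<and> h < fv (parent v))}"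

definition mt_desc :: "'v set \<Rightarrow> 'v \<Rightarrow> ('v \<Rightarrow> 'v) \<Rightarrow> ('v \<Rightarrow> ereal) \<Rightarrow> 'v \<times> ereal \<Rightarrow> 'v \<times> ereal \<Rightarrow> bool" where
  "mt_desc V r parent fv p q \<longleftrightarrow>
     p \<in> mt_points V r parent fv \<and> q \<in> mt_points V r parent fv \<and>
     snd p \<le> snd q \<and> (\<exists>n. fst q = (parent ^^ n) (fst p))"

definition mt_subtree :: "'v set \<Rightarrow> 'v \<Rightarrow> ('v \<Rightarrow> 'v) \<Rightarrow> ('v \<Rightarrow> ereal) \<Rightarrow> 'v \<times> ereal \<Rightarrow> ('v \<times> ereal) set" where
  "mt_subtree V r parent fv x = {p. mt_desc V r parent fv p x}"

definition mt_leaves :: "'v set \<Rightarrow> 'v \<Rightarrow> ('v \<Rightarrow> 'v) \<Rightarrow> ('v \<Rightarrow> ereal) \<Rightarrow> ('v \<times> ereal) set" where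
  "mt_leaves V r parent fv = (\<lambda>v. (v, fv v)) ` mt_leafv V r parent"

definition mt_lca :: "'v set \<Rightarrow> 'v \<Rightarrow> ('v \<Rightarrow> 'v) \<Rightarrow> ('v \<Rightarrow> ereal) \<Rightarrow> 'v \<times> ereal \<Rightarrow> 'v \<times> ereal \<Rightarrow> 'v \<times> ereal" where
  "mt_lca V r parent fv x y =
     (THE z. mt_desc V r parent fv x z \<and> mt_desc V r parent fv y z \<and>
        (\<forall>w. mt_desc V r parent fv x w \<and> mt_desc V r parent fv y w \<longrightarrow> mt_desc V r parent fv z w))"

definition mt_anc :: "'v set \<Rightarrow> 'v \<Rightarrow> ('v \<Rightarrow> 'v) \<Rightarrow> ('v \<Rightarrow> ereal) \<Rightarrow> ereal \<Rightarrow> 'v \<times> ereal \<Rightarrow> 'v \<times> ereal" where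
  "mt_anc V r parent fv h x = (THE y. mt_desc V r parent fv x y \<and> snd y = h)"

definition mt_layer :: "'v set \<Rightarrow> 'v \<Rightarrow> ('v \<Rightarrow> 'v) \<Rightarrow> ('v \<Rightarrow> ereal) \<Rightarrow> real \<Rightarrow> ('v \<times> ereal) set" where
  "mt_layer V r parent fv h = {x \<in> mt_points V r parent fv. snd x = ereal h}"

definition leaf_order :: "'v set \<Rightarrow> 'v \<Rightarrow> ('v \<Rightarrow> 'v) \<Rightarrow> ('v \<Rightarrow> ereal) \<Rightarrow> ('v \<times> ereal) rel \<Rightarrow> bool" where
  "leaf_order V r parent fv R \<longleftrightarrow>
     linear_order_on (mt_leaves V r parent fv) R \<and>
     (\<forall>u1 u u2. (u1, u) \<in> R \<and> (u, u2) \<in> R \<longrightarrow>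
        u \<in> mt_subtree V r parent fv (mt_lca V r parent fv u1 u2))"

definition to_layer_order :: "'v set \<Rightarrow> 'v \<Rightarrow> ('v \<Rightarrow> 'v) \<Rightarrow> ('v \<Rightarrow> ereal) \<Rightarrow> ('v \<times> ereal) rel \<Rightarrow> real \<Rightarrow> ('v \<times> ereal) rel" where
  "to_layer_order V r parent fv R h =
     {(x1, x2). x1 \<in> mt_layer V r parent fv h \<and> x2 \<in> mt_layer V r parent fv h \<and>
        (x1 = x2 \<or>
         (\<forall>u1 \<in> mt_leaves V r parent fv \<inter> mt_subtree V r parent fv x1.
          \<forall>u2 \<in> mt_leaves V r parent fv \<inter> mt_subtree V r parent fv x2. (u1, u2) \<in> R))}"

definition to_leaf_order :: "'v set \<Rightarrow> 'v \<Rightarrow> ('v \<Rightarrow> 'v) \<Rightarrow> ('v \<Rightarrow> ereal) \<Rightarrow> (real \<Rightarrow> ('v \<times> ereal) rel) \<Rightarrow> ('v \<times> ereal) rel" where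
  "to_leaf_order V r parent fv Lo =
     {(u1, u2). u1 \<in> mt_leaves V r parent fv \<and> u2 \<in> mt_leaves V r parent fv \<and>
        (let h = real_of_ereal (max (snd u1) (snd u2)) in
          (mt_anc V r parent fv (ereal h) u1, mt_anc V r parent fv (ereal h) u2) \<in> Lo h)}"

end

theory Submission
  imports Defs
begin

locale mtl =
  fixes V :: "'v set" and r :: 'v and parent :: "'v \<Rightarrow> 'v" and fv :: "'v \<Rightarrow> ereal"
  assumes mt: "merge_tree V r parent fv"
begin

abbreviation "desc \<equiv> mt_desc V r parent fv"
abbreviation "pts \<equiv> mt_points V r parent fv"

lemma basics: "finite V" "r \<in> V" "parent r = r" "\<And>v. v\<in>V \<Longrightarrow> parent v \<in> V"
  "\<And>v. v \<in> V \<Longrightarrow> \<exists>n. (parent^^n) v = r" "\<And>v. v\<in>V \<Longrightarrow> fv v = \<infinity> \<longleftrightarrow> v = r"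
  "\<And>v. v \<in> V \<Longrightarrow> v \<noteq> r \<Longrightarrow> fv v < fv (parent v)"
  "\<And>v. v \<in> mt_leafv V r parent \<Longrightarrow> 0 \<le> fv v"
  using mt unfolding merge_tree_def by auto

lemma chainV: "x \<in> V \<Longrightarrow> (parent^^n) x \<in> V"
  by (induction n) (auto simp: basics)

lemma root_fix: "(parent^^n) r = r"
  by (induction n) (auto simp: basics)

lemma mono: "x \<in> V \<Longrightarrow> fv x \<le> fv ((parent^^n) x)"
proof (induction n)
  case 0 then show ?case by simp
next
  case (Suc n)
  have y: "(parent^^n) x \<in> V" using Suc chainV by blast
  have "fv ((parent^^n) x) \<le> fv (parent ((parent^^n) x))"
    by (metis basics(3) basics(7) y order.strict_implies_order order_refl)
  then show ?case using Suc by simp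
qed

lemma mono_strict: assumes "x \<in> V" "x \<noteq> r" "n > 0"
  shows "fv (parent x) \<le> fv ((parent^^n) x)"
proof -
  obtain m where m: "n = Suc m" using assms(3) gr0_implies_Suc by blast
  have "(parent^^n) x = (parent^^m) (parent x)" using m by (simp add: funpow_Suc_right del: funpow.simps)
  then show ?thesis using mono[of "parent x" m] basics(4)[OF assms(1)] by simp
qed

lemma pts_iff: "(v,h) \<in> pts \<longleftrightarrow> v \<in> V \<and> (if v = r then h = \<infinity> else fv v \<le> h \<and> h < fv (parent v))"
  by (simp add: mt_points_def)

lemma pts_fv: "(v,h) \<in> pts \<Longrightarrow> fv v \<le> h"
  by (auto simp: pts_iff split: if_splits)

lemma anc_order:
  assumes "x \<in> V" "(w1,k1) \<in> pts" "(w2,k2) \<in> pts" "w1 = (parent^^n1) x" "w2 = (parent^^n2) x" "k1 \<le> k2"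
  shows "\<exists>n. w2 = (parent^^n) w1"
proof (cases "n1 \<le> n2")
  case True
  have "(parent^^((n2-n1)+n1)) x = (parent^^(n2-n1)) ((parent^^n1) x)" by (simp only: funpow_add comp_apply)
  then have "w2 = (parent^^(n2-n1)) w1" using assms True by simp
  then show ?thesis by blast
next
  case False
  have "(parent^^((n1-n2)+n2)) x = (parent^^(n1-n2)) ((parent^^n2) x)" by (simp only: funpow_add comp_apply)
  then have w1: "w1 = (parent^^(n1-n2)) w2" using assms False by simp
  show ?thesis
  proof (cases "w2 = r")
    case True then have "w1 = r" using w1 root_fix by simp
    then show ?thesis using True by (intro exI[of _ 0]) simp
  next
    case False2: False
    have w2V: "w2 \<in> V" using chainV assms by blast
    have "fv (parent w2) \<le> fv w1" using mono_strict[OF w2V False2, of "n1-n2"] w1 False by simp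
    moreover have "k2 < fv (parent w2)" using assms(3) False2 by (simp add: pts_iff)
    moreover have "fv w1 \<le> k1" using pts_fv assms(2) by blast
    ultimately show ?thesis using assms(6) by auto
  qed
qed

lemma desc_pts: "desc p q \<Longrightarrow> p \<in> pts \<and> q \<in> pts"
  by (simp add: mt_desc_def)

lemma pts_V: "p \<in> pts \<Longrightarrow> fst p \<in> V"
  by (cases p) (simp add: pts_iff)

lemma desc_total: assumes "desc p z1" "desc p z2" "snd z1 \<le> snd z2" shows "desc z1 z2"
proof -
  obtain n1 n2 where n: "fst z1 = (parent^^n1) (fst p)" "fst z2 = (parent^^n2) (fst p)"
    using assms unfolding mt_desc_def by blast
  have pV: "fst p \<in> V" using assms desc_pts pts_V by blast
  have zp: "(fst z1, snd z1) \<in> pts" "(fst z2, snd z2) \<in> pts" using assms desc_pts by auto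
  obtain n where "fst z2 = (parent^^n) (fst z1)"
    using anc_order[OF pV zp n assms(3)] by blast
  moreover have "z1 \<in> pts" "z2 \<in> pts" using assms desc_pts by blast+
  ultimately show ?thesis using assms(3) unfolding mt_desc_def by blast
qed

lemma vertex_antisym: assumes "w2 = (parent^^a) w1" "w1 = (parent^^b) w2" "w1 \<in> V" shows "w1 = w2"
proof (cases "w1 = r")
  case True then show ?thesis using assms(1) root_fix by metis
next
  case False
  show ?thesis
  proof (rule ccontr)
    assume ne: "w1 \<noteq> w2"
    then have "a > 0" using assms(1) by (cases a) auto
    have "w2 \<noteq> r" using assms(2) False root_fix by metis
    have w2V: "w2 \<in> V" using assms(1,3) chainV by blast
    have "fv w1 < fv (parent w1)" using basics(7) assms(3) False by blast
    also have "\<dots> \<le> fv w2" using mono_strict[OF assms(3) False \<open>a > 0\<close>] assms(1) by simp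
    also have "\<dots> \<le> fv w1" using mono[OF w2V, of b] assms(2) by simp
    finally show False by simp
  qed
qed

lemma desc_unique: assumes "desc p z1" "desc p z2" "snd z1 = snd z2" shows "z1 = z2"
proof -
  have a1: "desc z1 z2" using desc_total[OF assms(1,2)] assms(3) by simp
  have a2: "desc z2 z1" using desc_total[OF assms(2,1)] assms(3) by simp
  obtain a where ab1: "fst z2 = (parent^^a) (fst z1)" using a1 unfolding mt_desc_def by blast
  obtain b where ab2: "fst z1 = (parent^^b) (fst z2)" using a2 unfolding mt_desc_def by blast
  have V1: "fst z1 \<in> V" using assms(2) a2 desc_pts pts_V by blast
  have "fst z1 = fst z2" by (rule vertex_antisym[OF ab1 ab2 V1])
  then show ?thesis using assms(3) by (simp add: prod_eq_iff)
qed

lemma desc_trans: assumes "desc p q" "desc q s" shows "desc p s"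
proof -
  obtain n m where "fst q = (parent^^n) (fst p)" "fst s = (parent^^m) (fst q)"
    using assms unfolding mt_desc_def by blast
  then have "fst s = (parent^^(m+n)) (fst p)" by (simp add: funpow_add)
  moreover have "snd p \<le> snd s" using assms unfolding mt_desc_def by (meson order_trans)
  moreover have "p \<in> pts" "s \<in> pts" using assms desc_pts by blast+
  ultimately show ?thesis unfolding mt_desc_def by blast
qed

lemma desc_refl: assumes "p \<in> pts" shows "desc p p"
proof -
  have "fst p = (parent^^0) (fst p)" by simp
  then show ?thesis using assms unfolding mt_desc_def by blast
qed

lemma lca_ex: assumes p1: "p1 \<in> pts" and p2: "p2 \<in> pts"
  shows "\<exists>z. desc p1 z \<and> desc p2 z \<and> (\<forall>w. desc p1 w \<and> desc p2 w \<longrightarrow> desc z w)"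
proof -
  define S where "S = {z. desc p1 z \<and> desc p2 z}"
  have rp: "(r, \<infinity>) \<in> pts" using basics(2) by (simp add: pts_iff)
  have "(r, \<infinity>) \<in> S"
  proof -
    obtain n1 where n1: "(parent^^n1) (fst p1) = r" using basics(5) pts_V p1 by blast
    obtain n2 where n2: "(parent^^n2) (fst p2) = r" using basics(5) pts_V p2 by blast
    have e1: "\<exists>n. fst (r, \<infinity>::ereal) = (parent^^n) (fst p1)" using n1 by (intro exI[of _ n1]) simp
    have e2: "\<exists>n. fst (r, \<infinity>::ereal) = (parent^^n) (fst p2)" using n2 by (intro exI[of _ n2]) simp
    have "desc p1 (r, \<infinity>)" "desc p2 (r, \<infinity>)" unfolding mt_desc_def using p1 p2 rp e1 e2
      by simp_all
    then show ?thesis unfolding S_def by blast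
  qed
  define F where "F = fst ` S"
  have FV: "F \<subseteq> V" unfolding F_def S_def using desc_pts pts_V by blast
  then have finF: "finite F" using basics(1) finite_subset by blast
  have Fne: "F \<noteq> {}" using \<open>(r, \<infinity>) \<in> S\<close> F_def by blast
  define m where "m = Min (fv ` F)"
  have "m \<in> fv ` F" unfolding m_def using finF Fne by simp
  then obtain w where wF: "w \<in> F" and wm: "fv w = m" by blast
  have wmin: "\<And>w'. w' \<in> F \<Longrightarrow> fv w \<le> fv w'" using wm m_def finF by simp
  obtain k0 where k0: "(w,k0) \<in> S" using wF F_def by force
  define z where "z = (w, max (fv w) (max (snd p1) (snd p2)))"
  have d1: "desc p1 (w,k0)" and d2: "desc p2 (w,k0)" using k0 S_def by auto
  have wk0: "(w,k0) \<in> pts" using d1 desc_pts by blast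
  have le1: "snd p1 \<le> k0" and le2: "snd p2 \<le> k0" using d1 d2 unfolding mt_desc_def by auto
  have zp: "z \<in> pts"
  proof (cases "w = r")
    case True
    then have "fv w = \<infinity>" using basics(6) basics(2) by blast
    then show ?thesis using True z_def basics(2) by (simp add: pts_iff)
  next
    case False
    then have "fv w \<le> k0" "k0 < fv (parent w)" "w \<in> V" using wk0 by (auto simp: pts_iff)
    then show ?thesis using False z_def le1 le2 by (simp add: pts_iff; meson order_le_less_trans)
  qed
  have "\<exists>n. w = (parent^^n) (fst p1)" using d1 unfolding mt_desc_def by auto
  then have z1: "desc p1 z" using p1 zp unfolding mt_desc_def z_def by (auto simp: le_max_iff_disj)
  have "\<exists>n. w = (parent^^n) (fst p2)" using d2 unfolding mt_desc_def by auto
  then have z2: "desc p2 z" using p2 zp unfolding mt_desc_def z_def by (auto simp: le_max_iff_disj)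
  have "desc z s" if s: "desc p1 s" "desc p2 s" for s
  proof -
    have "s \<in> S" using s S_def by blast
    then have "fst s \<in> F" using F_def by blast
    then have "fv w \<le> fv (fst s)" using wmin by blast
    also have "\<dots> \<le> snd s" using pts_fv s desc_pts by (metis prod.collapse)
    finally have "snd z \<le> snd s" using s unfolding z_def mt_desc_def by auto
    then show ?thesis using desc_total z1 s by blast
  qed
  then show ?thesis using z1 z2 by blast
qed

lemma lca_props: assumes "p1 \<in> pts" "p2 \<in> pts"
  shows "desc p1 (mt_lca V r parent fv p1 p2) \<and> desc p2 (mt_lca V r parent fv p1 p2) \<and>
    (\<forall>w. desc p1 w \<and> desc p2 w \<longrightarrow> desc (mt_lca V r parent fv p1 p2) w)"
proof -
  have "\<exists>!z. desc p1 z \<and> desc p2 z \<and> (\<forall>w. desc p1 w \<and> desc p2 w \<longrightarrow> desc z w)"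
  proof (rule ex_ex1I)
    show "\<exists>z. desc p1 z \<and> desc p2 z \<and> (\<forall>w. desc p1 w \<and> desc p2 w \<longrightarrow> desc z w)"
      using lca_ex assms by blast
  next
    fix z y
    assume z: "desc p1 z \<and> desc p2 z \<and> (\<forall>w. desc p1 w \<and> desc p2 w \<longrightarrow> desc z w)"
      and y: "desc p1 y \<and> desc p2 y \<and> (\<forall>w. desc p1 w \<and> desc p2 w \<longrightarrow> desc y w)"
    then have "desc z y" "desc y z" by blast+
    then have "snd z = snd y" unfolding mt_desc_def by auto
    then show "z = y" using desc_unique z y by blast
  qed
  then show ?thesis unfolding mt_lca_def by (rule theI')
qed

lemma leaf_pts: "v \<in> mt_leafv V r parent \<Longrightarrow> (v, fv v) \<in> pts"
  using basics(7) by (auto simp: pts_iff mt_leafv_def)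

lemma leaf_min: assumes v: "v \<in> mt_leafv V r parent" and d: "desc p (v, fv v)" shows "p = (v, fv v)"
proof -
  obtain w k where p: "p = (w,k)" by (cases p)
  obtain n where n: "v = (parent^^n) w" and k: "k \<le> fv v" and wp: "(w,k) \<in> pts"
    using d p unfolding mt_desc_def by auto
  have wV: "w \<in> V" using wp pts_V by force
  have vr: "v \<noteq> r" "v \<in> V" using v by (auto simp: mt_leafv_def)
  show ?thesis
  proof (cases n)
    case 0
    then have "w = v" using n by simp
    then have "fv v \<le> k" using wp pts_fv by blast
    then show ?thesis using k p \<open>w = v\<close> by simp
  next
    case (Suc m)
    define y where "y = (parent^^m) w"
    have "parent y = v" using n Suc y_def by simp
    moreover have "y \<in> V" using chainV wV y_def by blast
    moreover have "y \<noteq> r" using \<open>parent y = v\<close> basics(3) vr by auto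
    ultimately show ?thesis using v unfolding mt_leafv_def by blast
  qed
qed

lemma anc_vertex_ex: assumes "x \<in> V" "fv x \<le> ereal h"
  shows "\<exists>n. fv ((parent^^n) x) \<le> ereal h \<and> ereal h < fv (parent ((parent^^n) x))"
proof -
  obtain k where "(parent^^k) x = r" using basics(5) assms(1) by blast
  then show ?thesis using assms
  proof (induction k arbitrary: x)
    case 0
    then have "fv x = \<infinity>" using basics(6) by simp
    then show ?case using 0 by simp
  next
    case (Suc k)
    show ?case
    proof (cases "ereal h < fv (parent x)")
      case True then show ?thesis using Suc by (intro exI[of _ 0]) simp
    next
      case False
      have "(parent^^k) (parent x) = r" using Suc(2) by (simp add: funpow_Suc_right del: funpow.simps)
      then have "\<exists>n. fv ((parent^^n) (parent x)) \<le> ereal h \<and> ereal h < fv (parent ((parent^^n) (parent x)))"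
        using Suc.IH[OF \<open>(parent^^k) (parent x) = r\<close> basics(4)[OF Suc(3)]] False by (simp add: not_less)
      then obtain n where "fv ((parent^^n) (parent x)) \<le> ereal h \<and> ereal h < fv (parent ((parent^^n) (parent x)))"
        by blast
      then show ?thesis by (intro exI[of _ "Suc n"]) (simp add: funpow_Suc_right del: funpow.simps)
    qed
  qed
qed

lemma anc_props: assumes "p \<in> pts" "snd p \<le> ereal h"
  shows "desc p (mt_anc V r parent fv (ereal h) p) \<and> snd (mt_anc V r parent fv (ereal h) p) = ereal h"
proof -
  have xV: "fst p \<in> V" using assms pts_V by blast
  have "fv (fst p) \<le> ereal h" using assms pts_fv by (metis order_trans prod.collapse)
  then obtain n where n: "fv ((parent^^n) (fst p)) \<le> ereal h" "ereal h < fv (parent ((parent^^n) (fst p)))"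
    using anc_vertex_ex xV by blast
  define w where "w = (parent^^n) (fst p)"
  have "w \<noteq> r" using n w_def basics(6) basics(2) by force
  moreover have "w \<in> V" using chainV xV w_def by blast
  ultimately have "(w, ereal h) \<in> pts" using n w_def by (simp add: pts_iff)
  then have "desc p (w, ereal h)" using assms w_def unfolding mt_desc_def by auto
  then have ex: "\<exists>y. desc p y \<and> snd y = ereal h" by force
  have "\<exists>!y. desc p y \<and> snd y = ereal h"
  proof (rule ex_ex1I)
    show "\<exists>y. desc p y \<and> snd y = ereal h" by (rule ex)
  next
    fix y1 y2 assume "desc p y1 \<and> snd y1 = ereal h" "desc p y2 \<and> snd y2 = ereal h"
    then show "y1 = y2" using desc_unique[of p y1 y2] by simp
  qed
  then show ?thesis unfolding mt_anc_def by (rule theI')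
qed

lemma convex:
  assumes lo: "leaf_order V r parent fv R"
    and l: "l \<in> mt_leaves V r parent fv" and l': "l' \<in> mt_leaves V r parent fv"
    and dl: "desc l a" and dl': "desc l' a" and R1: "(l,m) \<in> R" and R2: "(m,l') \<in> R"
  shows "desc m a"
proof -
  have "m \<in> mt_subtree V r parent fv (mt_lca V r parent fv l l')"
    using lo R1 R2 unfolding leaf_order_def by blast
  then have "desc m (mt_lca V r parent fv l l')" by (simp add: mt_subtree_def)
  moreover have "desc (mt_lca V r parent fv l l') a"
    using lca_props[of l l'] dl dl' desc_pts by blast
  ultimately show ?thesis using desc_trans by blast
qed

end

theorem lemma9:
  fixes V :: "'v set" and r :: 'v and parent :: "'v \<Rightarrow> 'v" and fv :: "'v \<Rightarrow> ereal"
    and R :: "('v \<times> ereal) rel"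
  assumes "merge_tree V r parent fv"
    and "leaf_order V r parent fv R"
  shows "to_leaf_order V r parent fv (to_layer_order V r parent fv R) = R"
proof -
  interpret mtl V r parent fv by unfold_locales (rule assms(1))
  let ?L = "mt_leaves V r parent fv"
  have lin: "linear_order_on ?L R" using assms(2) unfolding leaf_order_def by blast
  then have sub: "R \<subseteq> ?L \<times> ?L" and rfl: "\<And>x. x \<in> ?L \<Longrightarrow> (x,x) \<in> R"
    and tot: "\<And>x y. x \<in> ?L \<Longrightarrow> y \<in> ?L \<Longrightarrow> x \<noteq> y \<Longrightarrow> (x,y) \<in> R \<or> (y,x) \<in> R"
    unfolding linear_order_on_def partial_order_on_def preorder_on_def refl_on_def total_on_def
    by auto
  have key: "(u1,u2) \<in> to_leaf_order V r parent fv (to_layer_order V r parent fv R) \<longleftrightarrow> (u1,u2) \<in> R"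
    if u1: "u1 \<in> ?L" and u2: "u2 \<in> ?L" for u1 u2
  proof -
    obtain v1 where v1: "v1 \<in> mt_leafv V r parent" "u1 = (v1, fv v1)" using u1 unfolding mt_leaves_def by blast
    obtain v2 where v2: "v2 \<in> mt_leafv V r parent" "u2 = (v2, fv v2)" using u2 unfolding mt_leaves_def by blast
    have fin1: "\<bar>fv v1\<bar> \<noteq> \<infinity>" using v1 basics(6) basics(8)[OF v1(1)] unfolding mt_leafv_def by auto
    have fin2: "\<bar>fv v2\<bar> \<noteq> \<infinity>" using v2 basics(6) basics(8)[OF v2(1)] unfolding mt_leafv_def by auto
    define h where "h = real_of_ereal (max (snd u1) (snd u2))"
    have hM: "ereal h = max (snd u1) (snd u2)" unfolding h_def using fin1 fin2 v1 v2
      by (simp add: max_def ereal_real')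
    define a1 where "a1 = mt_anc V r parent fv (ereal h) u1"
    define a2 where "a2 = mt_anc V r parent fv (ereal h) u2"
    have up1: "u1 \<in> pts" using v1 leaf_pts by simp
    have up2: "u2 \<in> pts" using v2 leaf_pts by simp
    have a1: "desc u1 a1" "snd a1 = ereal h" using anc_props[OF up1, of h] hM a1_def by auto
    have a2: "desc u2 a2" "snd a2 = ereal h" using anc_props[OF up2, of h] hM a2_def by auto
    have lay: "a1 \<in> mt_layer V r parent fv h" "a2 \<in> mt_layer V r parent fv h"
      using a1 a2 desc_pts unfolding mt_layer_def by auto
    have "(u1,u2) \<in> to_leaf_order V r parent fv (to_layer_order V r parent fv R) \<longleftrightarrow>
       (a1 = a2 \<or> (\<forall>l1 \<in> ?L \<inter> mt_subtree V r parent fv a1. \<forall>l2 \<in> ?L \<inter> mt_subtree V r parent fv a2. (l1, l2) \<in> R))"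
    proof -
      have "(u1,u2) \<in> to_leaf_order V r parent fv (to_layer_order V r parent fv R) \<longleftrightarrow>
          (a1,a2) \<in> to_layer_order V r parent fv R h"
        unfolding to_leaf_order_def Let_def a1_def a2_def h_def using u1 u2 by simp
      also have "\<dots> \<longleftrightarrow> (a1 = a2 \<or> (\<forall>l1 \<in> ?L \<inter> mt_subtree V r parent fv a1. \<forall>l2 \<in> ?L \<inter> mt_subtree V r parent fv a2. (l1, l2) \<in> R))"
        using lay unfolding to_layer_order_def by simp
      finally show ?thesis .
    qed
    also have "\<dots> \<longleftrightarrow> (u1,u2) \<in> R"
    proof
      assume A: "a1 = a2 \<or> (\<forall>l1 \<in> ?L \<inter> mt_subtree V r parent fv a1. \<forall>l2 \<in> ?L \<inter> mt_subtree V r parent fv a2. (l1, l2) \<in> R)"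
      show "(u1,u2) \<in> R"
      proof (cases "a1 = a2")
        case True
        have "u1 = u2"
        proof (cases "fv v1 \<le> fv v2")
          case True2: True
          then have "ereal h = snd u2" using hM v1 v2 by simp
          then have "a2 = u2" using desc_unique[OF a2(1) desc_refl[OF up2]] a2(2) by simp
          then have "desc u1 (v2, fv v2)" using a1 True v2 by simp
          then show ?thesis using leaf_min v2 by simp
        next
          case False
          then have "ereal h = snd u1" using hM v1 v2 by simp
          then have "a1 = u1" using desc_unique[OF a1(1) desc_refl[OF up1]] a1(2) by simp
          then have "desc u2 (v1, fv v1)" using a2 True v1 by simp
          then show ?thesis using leaf_min[of v1 u2] v1 by simp
        qed
        then show ?thesis using rfl u1 by simp
      next
        case False
        then have all: "\<forall>l1 \<in> ?L \<inter> mt_subtree V r parent fv a1. \<forall>l2 \<in> ?L \<inter> mt_subtree V r parent fv a2. (l1, l2) \<in> R"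
          using A by blast
        have "u1 \<in> ?L \<inter> mt_subtree V r parent fv a1" using u1 a1(1) by (simp add: mt_subtree_def)
        moreover have "u2 \<in> ?L \<inter> mt_subtree V r parent fv a2" using u2 a2(1) by (simp add: mt_subtree_def)
        ultimately show ?thesis using all by blast
      qed
    next
      assume u12: "(u1,u2) \<in> R"
      show "a1 = a2 \<or> (\<forall>l1 \<in> ?L \<inter> mt_subtree V r parent fv a1. \<forall>l2 \<in> ?L \<inter> mt_subtree V r parent fv a2. (l1, l2) \<in> R)"
      proof (cases "a1 = a2")
        case True then show ?thesis by blast
      next
        case False
        note ne = False
        have "\<forall>l1 \<in> ?L \<inter> mt_subtree V r parent fv a1. \<forall>l2 \<in> ?L \<inter> mt_subtree V r parent fv a2. (l1, l2) \<in> R"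
        proof (intro ballI)
          fix l1 l2 assume l1: "l1 \<in> ?L \<inter> mt_subtree V r parent fv a1" and l2: "l2 \<in> ?L \<inter> mt_subtree V r parent fv a2"
          have d1: "desc l1 a1" and d2: "desc l2 a2" using l1 l2 unfolding mt_subtree_def by auto
          have sep: "\<not> (desc x a1 \<and> desc x a2)" for x
          proof -
            have "snd a1 = snd a2" using a1(2) a2(2) by simp
            then show ?thesis using desc_unique[of x a1 a2] ne by blast
          qed
          show "(l1,l2) \<in> R"
          proof (rule ccontr)
            assume nR: "(l1,l2) \<notin> R"
            have "l1 \<noteq> l2" using sep d1 d2 by blast
            then have l21: "(l2,l1) \<in> R" using tot l1 l2 nR by blast
            show False
            proof (cases "(u1,l2) \<in> R")
              case True
              then have "desc l2 a1" using convex[OF assms(2) u1 _ a1(1) d1 True l21] l1 by blast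
              then show False using sep d2 by blast
            next
              case False
              have "u1 \<noteq> l2" using sep a1(1) d2 by blast
              then have "(l2,u1) \<in> R" using tot u1 l2 False by blast
              then have "desc u1 a2" using convex[OF assms(2) _ u2 d2 a2(1) _ u12] l2 by blast
              then show False using sep a1(1) by blast
            qed
          qed
        qed
        then show ?thesis by blast
      qed
    qed
    finally show ?thesis .
  qed
  show ?thesis
  proof (rule set_eqI)
    fix p :: "('v \<times> ereal) \<times> 'v \<times> ereal"
    obtain u1 u2 where p: "p = (u1,u2)" by (cases p)
    show "p \<in> to_leaf_order V r parent fv (to_layer_order V r parent fv R) \<longleftrightarrow> p \<in> R"
    proof (cases "u1 \<in> ?L \<and> u2 \<in> ?L")
      case True then show ?thesis using key p by blast
    next
      case False
      have "p \<notin> R" using sub p False by blast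
      moreover have "p \<notin> to_leaf_order V r parent fv (to_layer_order V r parent fv R)"
        using p False unfolding to_leaf_order_def by blast
      ultimately show ?thesis by blast
    qed
  qed
qed

end
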